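(* Let $r\ge 2$ and let $\widehat{\rm TL}_r(q)$ be the affine Temperley–Lieb algebra over $\mathcal K_0$, with elements $e_1\in\widehat{\rm TL}_r(q)$ and $x_1^{\pm1}\in\widehat{\rm TL}_r(q)$ as described in the context. Put $\delta=-(q+q^{-1})$. Then in $\widehat{\rm TL}_r(q)$, $$\delta\,(q\,e_1x_1^2+e_1x_1e_1x_1)=q\,e_1x_1^2e_1+e_1x_1e_1x_1e_1=\delta\,(q\,x_1^2e_1+x_1e_1x_1e_1).$$
   Context: $\mathcal K_0=\mathbb C(q^{1/k})$ with $q$ an indeterminate. The braid group $\Gamma_r$ of type $B$ is generated by $\sigma_1,\dots,\sigma_{r-1},\xi_1$ subject to: $\sigma_i\sigma_{i+1}\sigma_i=\sigma_{i+1}\sigma_i\sigma_{i+1}$, $\sigma_i\sigma_j=\sigma_j\sigma_i$ for $|i-j|>1$, $\xi_1\sigma_j=\sigma_j\xi_1$ for $j\ge2$, and $\sigma_1\xi_1\sigma_1\xi_1=\xi_1\sigma_1\xi_1\sigma_1$. The affine Hecke algebra $\widehat H_r(q)$ is the quotient of the group algebra $\mathcal K_0\Gamma_r$ by the two-sided ideal generated by $(\sigma_i-q)(\sigma_i+q^{-1})$ for all $i$; write $T_i,X_1$ for the images of $\sigma_i,\xi_1$ and $X_{i+1}=T_iX_iT_i$. For $w\in{\rm Sym}_3$ let $T_w=T_{i_1}\cdots T_{i_k}$ for a reduced expression $w=s_{i_1}\cdots s_{i_k}$ ($s_1,s_2$ the simple transpositions), $\ell(w)=k$, and $\mathcal E_3=\sum_{w\in{\rm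 Sym}_3}(-q^{-1})^{\ell(w)}T_w$. The affine Temperley–Lieb algebra is $\widehat{\rm TL}_r(q)=\widehat H_r(q)/\langle\mathcal E_3\rangle$ (for $r\le2$ no quotient is taken). Let $e_i$ be the image of $T_i-q$ and $x_i$ the image of $X_i$. *)

theory Defs
  imports "HOL-Computational_Algebra.Polynomial" "HOL-Computational_Algebra.Fraction_Field"
begin

text \<open>K0 is realised as the field of rational functions C(t) in an indeterminate t,
  and q := t^k, so that t = q^(1/k).\<close>

type_synonym K = "complex poly fract"

definition tpar :: K where "tpar = Fract [:0, 1:] 1"

definition qpar :: "nat \<Rightarrow> K" where "qpar k = tpar ^ k"

datatype gen = Sg nat | Sginv nat | Xg | Xginv

text \<open>Elements: K-valued functions on words (only finitely supported ones matter).\<close>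
type_synonym elt = "gen list \<Rightarrow> K"

definition lin :: "(K \<times> gen list) list \<Rightarrow> elt" where
  "lin xs = (\<lambda>w. sum_list (map (\<lambda>(c, u). if u = w then c else 0) xs))"

definition monom :: "gen list \<Rightarrow> elt" where
  "monom u = lin [(1, u)]"

definition aadd :: "elt \<Rightarrow> elt \<Rightarrow> elt" (infixl "\<oplus>" 65) where
  "a \<oplus> b = (\<lambda>w. a w + b w)"

definition asub :: "elt \<Rightarrow> elt \<Rightarrow> elt" where
  "asub a b = (\<lambda>w. a w - b w)"

definition ascal :: "K \<Rightarrow> elt \<Rightarrow> elt" where
  "ascal c a = (\<lambda>w. c * a w)"

definition amul :: "elt \<Rightarrow> elt \<Rightarrow> elt" (infixl "\<odot>" 70) where
  "a \<odot> b = (\<lambda>w. \<Sum>i\<in>{..length w}. a (take i w) * b (drop i w))"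

inductive_set tsideal :: "elt set \<Rightarrow> elt set" for R :: "elt set" where
  gen:  "a \<in> R \<Longrightarrow> a \<in> tsideal R"
| zero: "(\<lambda>_. 0) \<in> tsideal R"
| add:  "a \<in> tsideal R \<Longrightarrow> b \<in> tsideal R \<Longrightarrow> a \<oplus> b \<in> tsideal R"
| scal: "a \<in> tsideal R \<Longrightarrow> ascal c a \<in> tsideal R"
| lmul: "a \<in> tsideal R \<Longrightarrow> monom u \<odot> a \<in> tsideal R"
| rmul: "a \<in> tsideal R \<Longrightarrow> a \<odot> monom u \<in> tsideal R"

text \<open>Group algebra of the type-B braid group Gamma_r: generators sigma_1..sigma_(r-1), xi_1
  and their inverses; generator letters with indices outside 1..r-1 are killed.\<close>
definition braidB_rels :: "nat \<Rightarrow> elt set" where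
  "braidB_rels r =
      {monom [Sg i] | i. \<not> (1 \<le> i \<and> i \<le> r - 1)}
    \<union> {monom [Sginv i] | i. \<not> (1 \<le> i \<and> i \<le> r - 1)}
    \<union> {asub (monom [Sg i, Sginv i]) (monom []) | i. 1 \<le> i \<and> i \<le> r - 1}
    \<union> {asub (monom [Sginv i, Sg i]) (monom []) | i. 1 \<le> i \<and> i \<le> r - 1}
    \<union> {asub (monom [Xg, Xginv]) (monom []), asub (monom [Xginv, Xg]) (monom [])}
    \<union> {asub (monom [Sg i, Sg (i+1), Sg i]) (monom [Sg (i+1), Sg i, Sg (i+1)])
         | i. 1 \<le> i \<and> i + 1 \<le> r - 1}
    \<union> {asub (monom [Sg i, Sg j]) (monom [Sg j, Sg i])
         | i j. 1 \<le> i \<and> i \<le> r - 1 \<and> 1 \<le> j \<and> j \<le> r - 1 \<and> (i + 1 < j \<or> j + 1 < i)}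
    \<union> {asub (monom [Xg, Sg j]) (monom [Sg j, Xg]) | j. 2 \<le> j \<and> j \<le> r - 1}
    \<union> {asub (monom [Sg 1, Xg, Sg 1, Xg]) (monom [Xg, Sg 1, Xg, Sg 1]) | _::unit. 2 \<le> r}"

definition hecke_rels :: "nat \<Rightarrow> nat \<Rightarrow> elt set" where
  "hecke_rels r k =
     {(lin [(1, [Sg i]), (- qpar k, [])]) \<odot> (lin [(1, [Sg i]), (inverse (qpar k), [])])
       | i. 1 \<le> i \<and> i \<le> r - 1}"

text \<open>E_3 = sum over w in Sym_3 of (-q^(-1))^(length w) T_w.\<close>
definition E3 :: "nat \<Rightarrow> elt" where
  "E3 k = (let p = - inverse (qpar k) in
     lin [(1, []), (p, [Sg 1]), (p, [Sg 2]), (p^2, [Sg 1, Sg 2]), (p^2, [Sg 2, Sg 1]),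
          (p^3, [Sg 1, Sg 2, Sg 1])])"

definition affTL_rels :: "nat \<Rightarrow> nat \<Rightarrow> elt set" where
  "affTL_rels r k = braidB_rels r \<union> hecke_rels r k \<union> (if 3 \<le> r then {E3 k} else {})"

definition affTL_eq :: "nat \<Rightarrow> nat \<Rightarrow> elt \<Rightarrow> elt \<Rightarrow> bool" where
  "affTL_eq r k a b \<longleftrightarrow> asub a b \<in> tsideal (affTL_rels r k)"

definition eA :: "nat \<Rightarrow> nat \<Rightarrow> elt" where
  "eA k i = lin [(1, [Sg i]), (- qpar k, [])]"

definition x1A :: elt where "x1A = monom [Xg]"

end

theory Submission
  imports Defs
begin

lemma tpar_nz: "tpar \<noteq> 0"
  unfolding tpar_def by (simp add: Zero_fract_def eq_fract)

lemma qpar_nz: "qpar k \<noteq> 0"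
  unfolding qpar_def using tpar_nz by simp

lemma lin_Nil: "lin [] = (\<lambda>_. 0)"
  unfolding lin_def by simp

lemma lin_app: "lin (xs @ ys) = lin xs \<oplus> lin ys"
  unfolding lin_def aadd_def by (rule ext) simp

lemma lin_Cons: "lin (x # xs) = lin [x] \<oplus> lin xs"
  using lin_app[of "[x]" xs] by simp

lemma amul_add_left: "(a \<oplus> b) \<odot> c = a \<odot> c \<oplus> b \<odot> c"
  unfolding amul_def aadd_def by (rule ext) (simp add: sum.distrib distrib_right)

lemma amul_add_right: "c \<odot> (a \<oplus> b) = c \<odot> a \<oplus> c \<odot> b"
  unfolding amul_def aadd_def by (rule ext) (simp add: sum.distrib distrib_left)

lemma amul_zero_left: "(\<lambda>_. 0) \<odot> c = (\<lambda>_. 0)"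
  unfolding amul_def by simp

lemma amul_zero_right: "c \<odot> (\<lambda>_. 0) = (\<lambda>_. 0)"
  unfolding amul_def by simp

lemma add_zero_right: "a \<oplus> (\<lambda>_. 0) = a"
  unfolding aadd_def by simp

lemma lin_single_mul: "lin [(c,u)] \<odot> lin [(d,v)] = lin [(c*d, u@v)]"
proof (rule ext)
  fix w
  have "(\<Sum>i\<in>{..length w}. lin [(c,u)] (take i w) * lin [(d,v)] (drop i w))
      = (\<Sum>i\<in>{..length w}. if i = length u \<and> u @ v = w then c*d else 0)"
  proof (rule sum.cong[OF refl])
    fix i assume i: "i \<in> {..length w}"
    have h: "(u = take i w \<and> v = drop i w) = (i = length u \<and> u @ v = w)"
      using i by (auto simp: min_def)
    have "lin [(c,u)] (take i w) * lin [(d,v)] (drop i w)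
      = (if u = take i w \<and> v = drop i w then c*d else 0)"
      unfolding lin_def by simp
    then show "lin [(c,u)] (take i w) * lin [(d,v)] (drop i w)
      = (if i = length u \<and> u @ v = w then c*d else 0)"
      by (simp only: h)
  qed
  also have "\<dots> = (if u @ v = w then c*d else 0)"
    by (auto simp: sum.delta')
  finally show "(lin [(c,u)] \<odot> lin [(d,v)]) w = lin [(c*d, u@v)] w"
    unfolding amul_def lin_def by simp
qed

definition mulL :: "(K \<times> gen list) list \<Rightarrow> (K \<times> gen list) list \<Rightarrow> (K \<times> gen list) list" where
  "mulL xs ys = concat (map (\<lambda>(c,u). map (\<lambda>(d,v). (c*d, u@v)) ys) xs)"

lemma lin_single_mul_list: "lin [(c,u)] \<odot> lin ys = lin (map (\<lambda>(d,v). (c*d, u@v)) ys)"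
proof (induction ys)
  case Nil then show ?case by (simp add: lin_Nil amul_zero_right)
next
  case (Cons y ys)
  obtain d v where y: "y = (d,v)" by (cases y)
  show ?case
    using Cons by (simp only: lin_Cons[of y ys] lin_Cons[of "(c*d, u@v)" for c d u v] list.map
      amul_add_right) (simp add: y lin_single_mul lin_Cons[symmetric])
qed

lemma lin_mul: "lin xs \<odot> lin ys = lin (mulL xs ys)"
proof (induction xs)
  case Nil then show ?case by (simp add: lin_Nil amul_zero_left mulL_def)
next
  case (Cons x xs)
  obtain c u where x: "x = (c,u)" by (cases x)
  show ?case
    using Cons by (simp only: lin_Cons[of x xs] amul_add_left) (simp add: x lin_single_mul_list mulL_def lin_app)
qed

lemma lin_scal: "ascal c (lin xs) = lin (map (\<lambda>(d,u). (c*d,u)) xs)"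
  unfolding ascal_def lin_def
  by (rule ext, induction xs) (auto simp: distrib_left)

lemma lin_sub: "asub (lin xs) (lin ys) = lin (xs @ map (\<lambda>(d,u). (-d,u)) ys)"
proof -
  have "lin (map (\<lambda>(d,u). (-d,u)) ys) = (\<lambda>w. - lin ys w)"
    unfolding lin_def by (rule ext, induction ys) auto
  then show ?thesis
    unfolding lin_app asub_def aadd_def by simp
qed

lemma lin_eqI:
  assumes "\<forall>w \<in> set (map snd xs) \<union> set (map snd ys). lin xs w = lin ys w"
  shows "lin xs = lin ys"
proof (rule ext)
  fix w
  have z: "w \<notin> set (map snd zs) \<Longrightarrow> lin zs w = 0" for zs
    unfolding lin_def by (induction zs) auto
  show "lin xs w = lin ys w"
  proof (cases "w \<in> set (map snd xs) \<union> set (map snd ys)")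
    case True then show ?thesis using assms by blast
  next
    case False then show ?thesis using z[of xs] z[of ys] by simp
  qed
qed

lemma tsideal_sub: "a \<in> tsideal R \<Longrightarrow> b \<in> tsideal R \<Longrightarrow> asub a b \<in> tsideal R"
proof -
  assume a: "a \<in> tsideal R" and b: "b \<in> tsideal R"
  have "asub a b = a \<oplus> ascal (-1) b"
    unfolding asub_def aadd_def ascal_def by simp
  then show ?thesis using a b by (simp add: tsideal.add tsideal.scal)
qed

lemma lin_eval: "lin xs w = sum_list (map (\<lambda>(c, u). if u = w then c else 0) xs)"
  unfolding lin_def by simp



lemma eq1_fun:
  fixes q :: K
  assumes q: "q \<noteq> 0"
  shows "asub (ascal (- (q + inverse q))
              (ascal q (lin [(1, [Sg 1]), (- q, [])] \<odot> monom [Xg] \<odot> monom [Xg]) \<oplus> lin [(1, [Sg 1]), (- q, [])] \<odot> monom [Xg] \<odot> lin [(1, [Sg 1]), (- q, [])] \<odot> monom [Xg]))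
           (ascal q (lin [(1, [Sg 1]), (- q, [])] \<odot> monom [Xg] \<odot> monom [Xg] \<odot> lin [(1, [Sg 1]), (- q, [])]) \<oplus> lin [(1, [Sg 1]), (- q, [])] \<odot> monom [Xg] \<odot> lin [(1, [Sg 1]), (- q, [])] \<odot> monom [Xg] \<odot> lin [(1, [Sg 1]), (- q, [])])
    = (monom [Sg 1] \<odot> asub (monom [Sg 1, Xg, Sg 1, Xg]) (monom [Xg, Sg 1, Xg, Sg 1])
        \<oplus> ascal (- q) (asub (monom [Sg 1, Xg, Sg 1, Xg]) (monom [Xg, Sg 1, Xg, Sg 1])))
      \<oplus> ascal (-1) ((lin [(1, [Sg 1]), (- q, [])] \<odot> lin [(1, [Sg 1]), (inverse q, [])]) \<odot> monom [Xg, Sg 1, Xg])"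
  unfolding monom_def
  apply (simp only: lin_mul lin_scal lin_sub lin_app[symmetric])
  apply (rule lin_eqI)
  apply (simp add: mulL_def lin_eval)
  apply (simp add: algebra_simps)
  done


lemma eq2_fun:
  fixes q :: K
  assumes q: "q \<noteq> 0"
  shows "asub (ascal q (lin [(1, [Sg 1]), (- q, [])] \<odot> monom [Xg] \<odot> monom [Xg] \<odot> lin [(1, [Sg 1]), (- q, [])]) \<oplus> lin [(1, [Sg 1]), (- q, [])] \<odot> monom [Xg] \<odot> lin [(1, [Sg 1]), (- q, [])] \<odot> monom [Xg] \<odot> lin [(1, [Sg 1]), (- q, [])])
           (ascal (- (q + inverse q))
              (ascal q (monom [Xg] \<odot> monom [Xg] \<odot> lin [(1, [Sg 1]), (- q, [])]) \<oplus> monom [Xg] \<odot> lin [(1, [Sg 1]), (- q, [])] \<odot> monom [Xg] \<odot> lin [(1, [Sg 1]), (- q, [])]))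
    = (asub (monom [Sg 1, Xg, Sg 1, Xg]) (monom [Xg, Sg 1, Xg, Sg 1]) \<odot> monom [Sg 1]
        \<oplus> ascal (- q) (asub (monom [Sg 1, Xg, Sg 1, Xg]) (monom [Xg, Sg 1, Xg, Sg 1])))
      \<oplus> monom [Xg, Sg 1, Xg] \<odot> (lin [(1, [Sg 1]), (- q, [])] \<odot> lin [(1, [Sg 1]), (inverse q, [])])"
  unfolding monom_def
  apply (simp only: lin_mul lin_scal lin_sub lin_app[symmetric])
  apply (rule lin_eqI)
  apply (simp add: mulL_def lin_eval)
  apply (simp add: algebra_simps)
  done

theorem lemma2p3:
  fixes r k :: nat
  assumes "2 \<le> r" and "1 \<le> k"
  shows "affTL_eq r k
           (ascal (- (qpar k + inverse (qpar k)))
              (ascal (qpar k) (eA k 1 \<odot> x1A \<odot> x1A) \<oplus> eA k 1 \<odot> x1A \<odot> eA k 1 \<odot> x1A))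
           (ascal (qpar k) (eA k 1 \<odot> x1A \<odot> x1A \<odot> eA k 1) \<oplus> eA k 1 \<odot> x1A \<odot> eA k 1 \<odot> x1A \<odot> eA k 1)
       \<and> affTL_eq r k
           (ascal (qpar k) (eA k 1 \<odot> x1A \<odot> x1A \<odot> eA k 1) \<oplus> eA k 1 \<odot> x1A \<odot> eA k 1 \<odot> x1A \<odot> eA k 1)
           (ascal (- (qpar k + inverse (qpar k)))
              (ascal (qpar k) (x1A \<odot> x1A \<odot> eA k 1) \<oplus> x1A \<odot> eA k 1 \<odot> x1A \<odot> eA k 1))"
proof -
  define q where "q = qpar k"
  have qnz: "q \<noteq> 0" unfolding q_def by (rule qpar_nz)
  define B where "B = asub (monom [Sg 1, Xg, Sg 1, Xg]) (monom [Xg, Sg 1, Xg, Sg 1])"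
  define Q where "Q = lin [(1, [Sg 1]), (- q, [])] \<odot> lin [(1, [Sg 1]), (inverse q, [])]"
  have hB: "B \<in> tsideal (affTL_rels r k)"
  proof (rule tsideal.gen)
    show "B \<in> affTL_rels r k"
      unfolding affTL_rels_def braidB_rels_def B_def using assms(1) by blast
  qed
  have hQ: "Q \<in> tsideal (affTL_rels r k)"
  proof (rule tsideal.gen)
    have "Q \<in> hecke_rels r k"
      unfolding hecke_rels_def Q_def q_def using assms(1) by force
    then show "Q \<in> affTL_rels r k" unfolding affTL_rels_def by blast
  qed
  have i1: "(monom [Sg 1] \<odot> B \<oplus> ascal (- q) B) \<oplus> ascal (-1) (Q \<odot> monom [Xg, Sg 1, Xg])
      \<in> tsideal (affTL_rels r k)"
    using hB hQ by (intro tsideal.add tsideal.scal tsideal.lmul tsideal.rmul)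
  have i2: "(B \<odot> monom [Sg 1] \<oplus> ascal (- q) B) \<oplus> monom [Xg, Sg 1, Xg] \<odot> Q
      \<in> tsideal (affTL_rels r k)"
    using hB hQ by (intro tsideal.add tsideal.scal tsideal.lmul tsideal.rmul)
  have e1: "asub (ascal (- (q + inverse q))
              (ascal q (lin [(1, [Sg 1]), (- q, [])] \<odot> monom [Xg] \<odot> monom [Xg]) \<oplus> lin [(1, [Sg 1]), (- q, [])] \<odot> monom [Xg] \<odot> lin [(1, [Sg 1]), (- q, [])] \<odot> monom [Xg]))
           (ascal q (lin [(1, [Sg 1]), (- q, [])] \<odot> monom [Xg] \<odot> monom [Xg] \<odot> lin [(1, [Sg 1]), (- q, [])]) \<oplus> lin [(1, [Sg 1]), (- q, [])] \<odot> monom [Xg] \<odot> lin [(1, [Sg 1]), (- q, [])] \<odot> monom [Xg] \<odot> lin [(1, [Sg 1]), (- q, [])])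
      \<in> tsideal (affTL_rels r k)"
    using i1 unfolding B_def Q_def eq1_fun[OF qnz] .
  have e2: "asub (ascal q (lin [(1, [Sg 1]), (- q, [])] \<odot> monom [Xg] \<odot> monom [Xg] \<odot> lin [(1, [Sg 1]), (- q, [])]) \<oplus> lin [(1, [Sg 1]), (- q, [])] \<odot> monom [Xg] \<odot> lin [(1, [Sg 1]), (- q, [])] \<odot> monom [Xg] \<odot> lin [(1, [Sg 1]), (- q, [])])
           (ascal (- (q + inverse q))
              (ascal q (monom [Xg] \<odot> monom [Xg] \<odot> lin [(1, [Sg 1]), (- q, [])]) \<oplus> monom [Xg] \<odot> lin [(1, [Sg 1]), (- q, [])] \<odot> monom [Xg] \<odot> lin [(1, [Sg 1]), (- q, [])]))
      \<in> tsideal (affTL_rels r k)"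
    using i2 unfolding B_def Q_def eq2_fun[OF qnz] .
  show ?thesis
    unfolding affTL_eq_def eA_def x1A_def q_def[symmetric]
    using e1 e2 by (rule conjI)
qed

end
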